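(* Let $X,Y$ be independent discrete-continuous random variables with discrete parts $X_D,Y_D$ and continuous parts $X_c,Y_c$, and let $Z=X+Y$ with continuous part $Z_c$. Then $h(Z_c)\ge\min\{h(X_c),h(Y_c)\}$.
   Context: A random variable $X$ is discrete-continuous if there is a countable set $\mathcal D$ with $0<\Pr(X\in\mathcal D)<1$ such that the conditional law of $X$ given $X\notin\mathcal D$ is absolutely continuous (this conditional variable is the continuous part $X_c$) and given $X\in\mathcal D$ is discrete (the discrete part $X_D$). For independent such $X,Y$, $Z=X+Y$ is discrete-continuous with discrete part $X_D+Y_D$ (probability $\Pr(X\in\mathcal D_X)\Pr(Y\in\mathcal D_Y)$) and continuous part the mixture of $X_D+Y_c$, $X_c+Y_D$, $X_c+Y_c$ with weights proportional to the corresponding products of probabilities. $h$ denotes differential entropy. *)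

theory Defs
  imports "HOL-Probability.Probability"
begin

definition cond_law :: "'a measure \<Rightarrow> ('a \<Rightarrow> real) \<Rightarrow> real set \<Rightarrow> real measure" where
  "cond_law M X A = uniform_measure (distr M borel X) A"

definition discrete_measure :: "real measure \<Rightarrow> bool" where
  "discrete_measure \<mu> \<longleftrightarrow> (\<exists>S. countable S \<and> emeasure \<mu> (UNIV - S) = 0)"

definition discrete_continuous :: "'a measure \<Rightarrow> ('a \<Rightarrow> real) \<Rightarrow> real set \<Rightarrow> bool" where
  "discrete_continuous M X D \<longleftrightarrow>
     X \<in> borel_measurable M \<and> countable D \<and>
     0 < measure M (X -` D \<inter> space M) \<and> measure M (X -` D \<inter> space M) < 1 \<and>
     absolutely_continuous lborel (cond_law M X (UNIV - D)) \<and>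
     discrete_measure (cond_law M X D)"

definition cont_part :: "'a measure \<Rightarrow> ('a \<Rightarrow> real) \<Rightarrow> real set \<Rightarrow> real measure" where
  "cont_part M X D = cond_law M X (UNIV - D)"

definition disc_part :: "'a measure \<Rightarrow> ('a \<Rightarrow> real) \<Rightarrow> real set \<Rightarrow> real measure" where
  "disc_part M X D = cond_law M X D"

definition dens :: "real measure \<Rightarrow> real \<Rightarrow> real" where
  "dens \<mu> x = enn2real (RN_deriv lborel \<mu> x)"

definition diff_entropy :: "real measure \<Rightarrow> real" where
  "diff_entropy \<mu> = - (\<integral>x. dens \<mu> x * ln (dens \<mu> x) \<partial>lborel)"

definition finite_diff_entropy :: "real measure \<Rightarrow> bool" where
  "finite_diff_entropy \<mu> \<longleftrightarrow> integrable lborel (\<lambda>x. dens \<mu> x * ln (dens \<mu> x))"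

definition sumset :: "real set \<Rightarrow> real set \<Rightarrow> real set" where
  "sumset A B = {a + b | a b. a \<in> A \<and> b \<in> B}"

end

theory Submission imports Defs begin

lemma dens_density:
  assumes fin: "finite_measure \<mu>" and s: "sets \<mu> = sets borel" and ac: "absolutely_continuous lborel \<mu>"
  shows "density lborel (\<lambda>x. ennreal (dens \<mu> x)) = \<mu>"
proof -
  have s': "sets \<mu> = sets lborel" using s by simp
  have 1: "density lborel (RN_deriv lborel \<mu>) = \<mu>"
    by (rule sigma_finite_measure.density_RN_deriv[OF sigma_finite_lborel ac s'])
  have "sigma_finite_measure \<mu>" using fin by (simp add: finite_measure.sigma_finite_measure)
  then have 2: "AE x in lborel. RN_deriv lborel \<mu> x \<noteq> \<infinity>"
    by (rule sigma_finite_measure.RN_deriv_finite[OF sigma_finite_lborel _ ac s'])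
  have "density lborel (\<lambda>x. ennreal (dens \<mu> x)) = density lborel (RN_deriv lborel \<mu>)"
    by (rule density_cong) (use 2 in \<open>auto simp: dens_def less_top\<close>)
  with 1 show ?thesis by simp
qed


lemma countable_borel: "countable (D::real set) \<Longrightarrow> D \<in> sets borel"
  by (rule sets.countable) auto

lemma null_translate:
  fixes A :: "real set"
  assumes "A \<in> sets borel" "emeasure lborel A = 0"
  shows "emeasure lborel {u. u + v \<in> A} = 0"
proof -
  have "emeasure lborel A = emeasure (distr lborel borel ((+) v)) A"
    by (simp add: lborel_distr_plus)
  also have "\<dots> = emeasure lborel ((+) v -` A \<inter> space lborel)"
    using assms by (subst emeasure_distr) auto
  also have "(+) v -` A \<inter> space lborel = {u. u + v \<in> A}" by (auto simp: add.commute)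
  finally show ?thesis using assms by simp
qed

lemma null_sum_event:
  fixes M :: "'a measure" and U V :: "'a \<Rightarrow> real"
  assumes P: "prob_space M" and ind: "prob_space.indep_var M borel U borel V"
    and DU: "countable DU"
    and ac: "absolutely_continuous lborel (cont_part M U DU)"
    and pos: "emeasure M (U -` (UNIV - DU) \<inter> space M) \<noteq> 0"
    and A: "A \<in> sets borel" "emeasure lborel A = 0"
  shows "emeasure M {\<omega>\<in>space M. U \<omega> + V \<omega> \<in> A \<and> U \<omega> \<notin> DU} = 0"
proof -
  interpret prob_space M by fact
  have rv: "random_variable borel U" "random_variable borel V"
    using ind by (auto dest: indep_var_rv1 indep_var_rv2)
  note [measurable] = rv A(1) countable_borel[OF DU]
  let ?PU = "distr M borel U" and ?PV = "distr M borel V"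
  interpret PU: prob_space ?PU by (rule prob_space_distr) (use rv in auto)
  interpret PV: prob_space ?PV by (rule prob_space_distr) (use rv in auto)
  interpret PUV: pair_prob_space ?PU ?PV ..
  have joint: "?PU \<Otimes>\<^sub>M ?PV = distr M (borel \<Otimes>\<^sub>M borel) (\<lambda>x. (U x, V x))"
    using ind by (simp add: indep_var_distribution_eq)
  define E where "E = {p\<in>space (borel \<Otimes>\<^sub>M borel). fst p + snd p \<in> A \<and> fst p \<notin> DU}"
  have "Measurable.pred (borel \<Otimes>\<^sub>M borel) (\<lambda>p::real\<times>real. fst p + snd p \<in> A \<and> fst p \<notin> DU)"
    by measurable
  then have E[measurable]: "E \<in> sets (borel \<Otimes>\<^sub>M borel)"
    unfolding E_def Measurable.pred_def[symmetric] .
  have "emeasure M {\<omega>\<in>space M. U \<omega> + V \<omega> \<in> A \<and> U \<omega> \<notin> DU}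
      = emeasure (distr M (borel \<Otimes>\<^sub>M borel) (\<lambda>x. (U x, V x))) E"
    by (subst emeasure_distr[OF _ E]) (simp, auto simp: E_def space_pair_measure intro!: arg_cong[where f="emeasure M"])
  also have "\<dots> = emeasure (?PU \<Otimes>\<^sub>M ?PV) E" by (simp add: joint)
  also have "\<dots> = (\<integral>\<^sup>+y. emeasure ?PU ((\<lambda>x. (x, y)) -` E) \<partial>?PV)"
    by (rule PUV.emeasure_pair_measure_alt2) (simp add: E)
  also have "\<dots> = (\<integral>\<^sup>+y. 0 \<partial>?PV)"
  proof (rule nn_integral_cong)
    fix v
    have B: "{u. u + v \<in> A} \<in> sets borel" by measurable
    have nB: "emeasure lborel {u. u + v \<in> A} = 0" by (rule null_translate[OF A])
    then have "{u. u + v \<in> A} \<in> null_sets lborel" using B by (simp add: null_sets_def)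
    with ac have "{u. u + v \<in> A} \<in> null_sets (cont_part M U DU)"
      by (auto simp: absolutely_continuous_def)
    then have 0: "emeasure (uniform_measure ?PU (UNIV - DU)) {u. u + v \<in> A} = 0"
      by (simp add: cont_part_def cond_law_def null_sets_def)
    have "emeasure (uniform_measure ?PU (UNIV - DU)) {u. u + v \<in> A}
        = emeasure ?PU ((UNIV - DU) \<inter> {u. u + v \<in> A}) / emeasure ?PU (UNIV - DU)"
      by (rule emeasure_uniform_measure) (auto simp: B)
    moreover have "emeasure ?PU (UNIV - DU) \<noteq> 0"
      using pos by (subst emeasure_distr) auto
    moreover have "emeasure ?PU (UNIV - DU) \<noteq> \<infinity>" by simp
    ultimately have "emeasure ?PU ((UNIV - DU) \<inter> {u. u + v \<in> A}) = 0"
      using 0 by (simp add: ennreal_divide_eq_0_iff)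
    moreover have "(\<lambda>x. (x, v)) -` E = (UNIV - DU) \<inter> {u. u + v \<in> A}"
      by (auto simp: E_def space_pair_measure)
    ultimately show "emeasure ?PU ((\<lambda>x. (x, v)) -` E) = 0" by simp
  qed
  finally show ?thesis by simp
qed


lemma gibbs_pointwise:
  fixes a b :: real
  assumes "0 \<le> a" "0 \<le> b" "0 < a \<longrightarrow> 0 < b"
  shows "a * ln b - a * ln a \<le> b - a"
proof (cases "a = 0")
  case True then show ?thesis using assms by simp
next
  case False
  then have a: "0 < a" using assms by simp
  then have b: "0 < b" using assms by simp
  have "ln (b / a) \<le> b / a - 1" by (rule ln_le_minus_one) (simp add: a b)
  then have "a * ln (b / a) \<le> a * (b / a - 1)" using a by (simp add: mult_left_mono)
  moreover have "ln (b / a) = ln b - ln a" using a b by (simp add: ln_div)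
  ultimately show ?thesis using a by (simp add: algebra_simps)
qed

lemma gibbs:
  fixes g \<psi> :: "real \<Rightarrow> real"
  assumes gm: "g \<in> borel_measurable borel" and g0: "\<And>y. 0 \<le> g y"
    and gi: "integrable lborel g" and g1: "(\<integral>y. g y \<partial>lborel) = 1"
    and gl: "integrable lborel (\<lambda>y. g y * ln (g y))"
    and pm: "\<psi> \<in> borel_measurable borel" and p0: "\<And>y. 0 \<le> \<psi> y"
    and pi: "integrable lborel \<psi>" and p1: "(\<integral>y. \<psi> y \<partial>lborel) \<le> 1"
    and pl: "integrable lborel (\<lambda>y. g y * ln (\<psi> y))"
    and ae: "AE y in lborel. 0 < g y \<longrightarrow> 0 < \<psi> y"
  shows "- (\<integral>y. g y * ln (g y) \<partial>lborel) \<le> - (\<integral>y. g y * ln (\<psi> y) \<partial>lborel)"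
proof -
  have "(\<integral>y. g y * ln (\<psi> y) - g y * ln (g y) \<partial>lborel) \<le> (\<integral>y. \<psi> y - g y \<partial>lborel)"
    by (rule integral_mono_AE) (use ae g0 p0 gibbs_pointwise pl gl pi gi in auto)
  also have "\<dots> = (\<integral>y. \<psi> y \<partial>lborel) - 1" using pi gi g1 by simp
  finally have "(\<integral>y. g y * ln (\<psi> y) \<partial>lborel) - (\<integral>y. g y * ln (g y) \<partial>lborel) \<le> (\<integral>y. \<psi> y \<partial>lborel) - 1"
    using pl gl by simp
  then show ?thesis using p1 by simp
qed


lemma indep_var_commute:
  assumes P: "prob_space M" and "prob_space.indep_var M S X T Y"
  shows "prob_space.indep_var M T Y S X"
proof -
  interpret prob_space M by fact
  have "\<And>A B. indep_set A B \<Longrightarrow> indep_set B A"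
    unfolding indep_sets2_eq by (metis Int_commute mult.commute)
  then show ?thesis using assms(2) unfolding indep_var_eq by blast
qed

lemma uniform_measure_real_density:
  fixes N :: "real measure"
  assumes "finite_measure N" and A: "A \<in> sets N" and c: "measure N A > 0"
  shows "uniform_measure N A = density N (\<lambda>x. indicator A x / measure N A)"
proof -
  interpret finite_measure N by fact
  note [measurable] = A
  have e: "emeasure N A = ennreal (measure N A)" by (simp add: emeasure_eq_measure)
  have d1: "1 / ennreal (measure N A) = ennreal (1 / measure N A)"
    by (metis divide_ennreal ennreal_1 zero_le_one c)
  show ?thesis unfolding uniform_measure_def e
    by (intro density_cong) (auto simp: d1 split: split_indicator)
qed

lemma integral_uniform_measure_real:
  fixes N :: "real measure" and h :: "real \<Rightarrow> real"
  assumes fin: "finite_measure N" and A[measurable]: "A \<in> sets N" and c: "measure N A > 0"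
    and h[measurable]: "h \<in> borel_measurable N"
    and hi: "integrable N (\<lambda>x. h x * indicator A x)"
  shows "integrable (uniform_measure N A) h"
    and "(\<integral>x. h x * indicator A x \<partial>N) = measure N A * (\<integral>x. h x \<partial>uniform_measure N A)"
proof -
  note eq = uniform_measure_real_density[OF fin A c]
  have m: "(\<lambda>x. indicator A x / measure N A) \<in> borel_measurable N" by measurable
  show "integrable (uniform_measure N A) h"
    unfolding eq
  proof (subst integrable_density[OF h m])
    show "AE x in N. 0 \<le> indicator A x / measure N A" using c by auto
    have "integrable N (\<lambda>x. (1 / measure N A) * (h x * indicator A x))"
      using hi by (rule integrable_mult_right)
    moreover have "(\<lambda>x. (indicator A x / measure N A) *\<^sub>R h x) = (\<lambda>x. (1 / measure N A) * (h x * indicator A x))"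
      by (auto simp: fun_eq_iff)
    ultimately show "integrable N (\<lambda>x. (indicator A x / measure N A) *\<^sub>R h x)" by simp
  qed
  have "(\<integral>x. h x \<partial>uniform_measure N A) = (\<integral>x. (indicator A x / measure N A) * h x \<partial>N)"
    unfolding eq by (subst integral_density[OF h m]) auto
  also have "\<dots> = (\<integral>x. h x * indicator A x \<partial>N) / measure N A"
    by (simp add: mult.commute)
  finally show "(\<integral>x. h x * indicator A x \<partial>N) = measure N A * (\<integral>x. h x \<partial>uniform_measure N A)"
    using c by simp
qed


lemma dens_props:
  assumes ps: "prob_space \<mu>" and s: "sets \<mu> = sets borel" and ac: "absolutely_continuous lborel \<mu>"
  shows "density lborel (\<lambda>x. ennreal (dens \<mu> x)) = \<mu>"
    and "dens \<mu> \<in> borel_measurable borel"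
    and "\<And>x. 0 \<le> dens \<mu> x"
    and "integrable lborel (dens \<mu>)"
    and "(\<integral>x. dens \<mu> x \<partial>lborel) = 1"
proof -
  interpret prob_space \<mu> by fact
  show d: "density lborel (\<lambda>x. ennreal (dens \<mu> x)) = \<mu>"
    by (rule dens_density) (use s ac in \<open>auto intro: finite_measure_axioms\<close>)
  show m: "dens \<mu> \<in> borel_measurable borel" unfolding dens_def by measurable
  show n: "\<And>x. 0 \<le> dens \<mu> x" by (simp add: dens_def)
  have "integrable \<mu> (\<lambda>x. 1::real)" by simp
  then have "integrable (density lborel (\<lambda>x. ennreal (dens \<mu> x))) (\<lambda>x. 1::real)" using d by simp
  then show "integrable lborel (dens \<mu>)"
    by (subst (asm) integrable_density) (use m n in auto)
  have "(\<integral>x. 1 \<partial>\<mu>) = (1::real)" using prob_space by (simp add: lebesgue_integral_const)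
  then have "(\<integral>x. 1 \<partial>(density lborel (\<lambda>x. ennreal (dens \<mu> x)))) = (1::real)" using d by simp
  then show "(\<integral>x. dens \<mu> x \<partial>lborel) = 1"
    by (subst (asm) integral_density) (use m n in auto)
qed

lemma cont_part_prob:
  assumes P: "prob_space M" and rv: "U \<in> borel_measurable M" and DU: "countable DU"
    and pos: "emeasure M (U -` (UNIV - DU) \<inter> space M) \<noteq> 0"
  shows "prob_space (cont_part M U DU)" and "sets (cont_part M U DU) = sets borel"
proof -
  interpret prob_space M by fact
  note [measurable] = rv countable_borel[OF DU]
  have n0: "emeasure (distr M borel U) (UNIV - DU) \<noteq> 0" using pos by (subst emeasure_distr) auto
  interpret D: prob_space "distr M borel U" by (rule prob_space_distr) (simp add: rv)
  have "emeasure (distr M borel U) (UNIV - DU) \<noteq> \<infinity>"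
    using D.emeasure_finite by simp
  with n0 show "prob_space (cont_part M U DU)"
    unfolding cont_part_def cond_law_def by (rule prob_space_uniform_measure)
  show "sets (cont_part M U DU) = sets borel" by (simp add: cont_part_def cond_law_def)
qed


lemma sum_lower:
  fixes M :: "'a measure" and U V :: "'a \<Rightarrow> real" and f :: "real \<Rightarrow> real"
  assumes P: "prob_space M" and ind: "prob_space.indep_var M borel V borel U"
    and DU: "countable DU"
    and ac: "absolutely_continuous lborel (cont_part M U DU)"
    and pos: "emeasure M (U -` (UNIV - DU) \<inter> space M) \<noteq> 0"
    and fe: "finite_diff_entropy (cont_part M U DU)"
    and fm[measurable]: "f \<in> borel_measurable borel" and f0: "\<And>x. 0 \<le> f x"
    and fi: "integrable lborel f" and f1: "(\<integral>x. f x \<partial>lborel) \<le> 1"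
    and B[measurable]: "B \<in> sets borel"
    and int: "integrable M (\<lambda>\<omega>. - ln (f (U \<omega> + V \<omega>)) * indicator (UNIV - DU) (U \<omega>) * indicator B (V \<omega>))"
    and aepos: "AE \<omega> in M. U \<omega> \<notin> DU \<and> V \<omega> \<in> B \<longrightarrow> 0 < f (U \<omega> + V \<omega>)"
  shows "measure M (V -` B \<inter> space M) * measure M (U -` (UNIV - DU) \<inter> space M) * diff_entropy (cont_part M U DU)
     \<le> (\<integral>\<omega>. - ln (f (U \<omega> + V \<omega>)) * indicator (UNIV - DU) (U \<omega>) * indicator B (V \<omega>) \<partial>M)"
proof -
  interpret prob_space M by fact
  have rv: "random_variable borel V" "random_variable borel U"
    using ind by (auto dest: indep_var_rv1 indep_var_rv2)
  note [measurable] = rv countable_borel[OF DU]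
  let ?PU = "distr M borel U" and ?PV = "distr M borel V"
  interpret PU: prob_space ?PU by (rule prob_space_distr) (use rv in auto)
  interpret PV: prob_space ?PV by (rule prob_space_distr) (use rv in auto)
  interpret PVU: pair_prob_space ?PV ?PU ..
  have joint: "?PV \<Otimes>\<^sub>M ?PU = distr M (borel \<Otimes>\<^sub>M borel) (\<lambda>x. (V x, U x))"
    using ind by (simp add: indep_var_distribution_eq)
  define H where "H = (\<lambda>p::real\<times>real. - ln (f (snd p + fst p)) * indicator (UNIV - DU) (snd p) * indicator B (fst p))"
  have Hm[measurable]: "H \<in> borel_measurable (borel \<Otimes>\<^sub>M borel)" unfolding H_def by measurable
  have HM: "(\<lambda>\<omega>. H (V \<omega>, U \<omega>)) = (\<lambda>\<omega>. - ln (f (U \<omega> + V \<omega>)) * indicator (UNIV - DU) (U \<omega>) * indicator B (V \<omega>))"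
    by (simp add: H_def fun_eq_iff)
  have Hint: "integrable (?PV \<Otimes>\<^sub>M ?PU) H"
    unfolding joint by (subst integrable_distr_eq) (simp, simp, unfold HM, rule int)
  have Heq: "integral\<^sup>L (?PV \<Otimes>\<^sub>M ?PU) H = (\<integral>\<omega>. - ln (f (U \<omega> + V \<omega>)) * indicator (UNIV - DU) (U \<omega>) * indicator B (V \<omega>) \<partial>M)"
    unfolding joint by (subst integral_distr) (simp_all add: HM)
  define c where "c = measure M (U -` (UNIV - DU) \<inter> space M)"
  have c: "c = measure ?PU (UNIV - DU)" unfolding c_def by (subst measure_distr) auto
  have cpos: "c > 0" using pos unfolding c_def by (simp add: emeasure_eq_measure zero_less_measure_iff)
  let ?Uc = "cont_part M U DU"
  define g where "g = dens ?Uc"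
  define hU where "hU = diff_entropy ?Uc"
  have Ucp: "prob_space ?Uc" "sets ?Uc = sets borel"
    using cont_part_prob[OF P rv(2) DU pos] by auto
  note gp = dens_props[OF Ucp ac, folded g_def]
  note [measurable] = gp(2)
  have Uc_def': "?Uc = uniform_measure ?PU (UNIV - DU)" by (simp add: cont_part_def cond_law_def)
  have gl: "integrable lborel (\<lambda>y. g y * ln (g y))" using fe by (simp add: finite_diff_entropy_def g_def)
  have hU: "hU = - (\<integral>y. g y * ln (g y) \<partial>lborel)" by (simp add: hU_def diff_entropy_def g_def)
  have ae1: "AE v in ?PV. integrable ?PU (\<lambda>u. H (v, u))"
    by (rule PVU.AE_integrable_fst'[OF Hint])
  have "AE p in ?PV \<Otimes>\<^sub>M ?PU. snd p \<notin> DU \<and> fst p \<in> B \<longrightarrow> 0 < f (snd p + fst p)"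
    unfolding joint by (subst AE_distr_iff) (use aepos in auto)
  then have ae2: "AE v in ?PV. AE u in ?PU. u \<notin> DU \<and> v \<in> B \<longrightarrow> 0 < f (u + v)"
    by (auto dest: PVU.AE_pair)
  have key: "AE v in ?PV. c * hU * indicator B v \<le> (\<integral>u. H (v, u) \<partial>?PU)"
    using ae1 ae2
  proof eventually_elim
    case (elim v)
    show ?case
    proof (cases "v \<in> B")
      case False then show ?thesis by (simp add: H_def)
    next
      case True
      define h where "h = (\<lambda>u. - ln (f (u + v)))"
      have hm[measurable]: "h \<in> borel_measurable borel" unfolding h_def by measurable
      have Hvu: "(\<lambda>u. H (v, u)) = (\<lambda>u. h u * indicator (UNIV - DU) u)"
        using True by (simp add: H_def h_def fun_eq_iff)
      have hi: "integrable ?PU (\<lambda>u. h u * indicator (UNIV - DU) u)" using elim(1) Hvu by simp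
      have cpos': "measure ?PU (UNIV - DU) > 0" using cpos c by simp
      note um = integral_uniform_measure_real[OF PU.finite_measure_axioms _ cpos' _ hi]
      have hUc: "integrable ?Uc h" using um(1) by (simp add: Uc_def')
      have eq1: "(\<integral>u. H (v, u) \<partial>?PU) = c * (\<integral>u. h u \<partial>?Uc)"
        using um(2) by (simp add: Hvu c Uc_def')
      have dens_eq: "density lborel (\<lambda>x. ennreal (g x)) = ?Uc" using gp(1) .
      have gh_int: "integrable lborel (\<lambda>u. g u * h u)"
        using hUc unfolding dens_eq[symmetric] by (subst (asm) integrable_density) (use gp in auto)
      have gh_eq: "(\<integral>u. h u \<partial>?Uc) = (\<integral>u. g u * h u \<partial>lborel)"
        unfolding dens_eq[symmetric] by (subst integral_density) (use gp in auto)
      define \<psi> where "\<psi> = (\<lambda>u. f (u + v))"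
      have \<psi>m[measurable]: "\<psi> \<in> borel_measurable borel" unfolding \<psi>_def by measurable
      have \<psi>_aff: "\<psi> = (\<lambda>x. f (v + 1 * x))" by (simp add: \<psi>_def fun_eq_iff add.commute)
      have \<psi>i: "integrable lborel \<psi>" unfolding \<psi>_aff
        using lborel_integrable_real_affine_iff[of 1 f v] fi by simp
      have \<psi>1: "(\<integral>x. \<psi> x \<partial>lborel) \<le> 1"
        using lborel_integral_real_affine[of 1 f v] f1 unfolding \<psi>_aff by simp
      have gl\<psi>: "integrable lborel (\<lambda>y. g y * ln (\<psi> y))"
      proof -
        have "integrable lborel (\<lambda>u. - (g u * h u))" using gh_int by simp
        moreover have "(\<lambda>u. - (g u * h u)) = (\<lambda>y. g y * ln (\<psi> y))" by (simp add: h_def \<psi>_def fun_eq_iff)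
        ultimately show ?thesis by simp
      qed
      have ae3: "AE y in lborel. 0 < g y \<longrightarrow> 0 < \<psi> y"
      proof -
        have "AE u in ?PU. u \<in> UNIV - DU \<longrightarrow> 0 < f (u + v)" using elim(2) True by auto
        then have "AE u in uniform_measure ?PU (UNIV - DU). 0 < f (u + v)"
          by (intro AE_uniform_measureI) auto
        then have "AE u in density lborel (\<lambda>x. ennreal (g x)). 0 < \<psi> u"
          unfolding dens_eq Uc_def' \<psi>_def .
        then show ?thesis by (subst (asm) AE_density) auto
      qed
      have gib: "- (\<integral>y. g y * ln (g y) \<partial>lborel) \<le> - (\<integral>y. g y * ln (\<psi> y) \<partial>lborel)"
        by (rule gibbs[OF gp(2,3,4,5) gl \<psi>m _ \<psi>i \<psi>1 gl\<psi> ae3]) (simp add: \<psi>_def f0)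
      have "- (\<integral>y. g y * ln (\<psi> y) \<partial>lborel) = (\<integral>u. g u * h u \<partial>lborel)"
        by (simp add: h_def \<psi>_def)
      then have "hU \<le> (\<integral>u. h u \<partial>?Uc)" using gib hU gh_eq by simp
      then have "c * hU \<le> c * (\<integral>u. h u \<partial>?Uc)" using cpos by simp
      then show ?thesis using True eq1 by simp
    qed
  qed
  have iB: "integrable ?PV (indicator B :: real \<Rightarrow> real)"
    by (rule integrable_real_indicator) (auto simp: less_top[symmetric])
  have "(\<integral>v. c * hU * indicator B v \<partial>?PV) \<le> (\<integral>v. (\<integral>u. H (v, u) \<partial>?PU) \<partial>?PV)"
    by (rule integral_mono_AE[OF _ PVU.integrable_fst'[OF Hint] key]) (simp add: iB)
  also have "\<dots> = integral\<^sup>L (?PV \<Otimes>\<^sub>M ?PU) H" by (rule PVU.integral_fst'[OF Hint])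
  finally have "c * hU * measure ?PV B \<le> integral\<^sup>L (?PV \<Otimes>\<^sub>M ?PU) H" by simp
  moreover have "measure ?PV B = measure M (V -` B \<inter> space M)" by (subst measure_distr) auto
  ultimately show ?thesis using Heq unfolding c_def hU_def by (simp add: mult_ac)
qed


lemma uniform_measure_real_iff:
  fixes N :: "real measure" and h :: "real \<Rightarrow> real"
  assumes fin: "finite_measure N" and A[measurable]: "A \<in> sets N" and c: "measure N A > 0"
    and h[measurable]: "h \<in> borel_measurable N"
  shows "integrable (uniform_measure N A) h \<longleftrightarrow> integrable N (\<lambda>x. h x * indicator A x)"
    and "(\<integral>x. h x * indicator A x \<partial>N) = measure N A * (\<integral>x. h x \<partial>uniform_measure N A)"
proof -
  note eq = uniform_measure_real_density[OF fin A c]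
  have m: "(\<lambda>x. indicator A x / measure N A) \<in> borel_measurable N" by measurable
  have "integrable (uniform_measure N A) h \<longleftrightarrow> integrable N (\<lambda>x. (indicator A x / measure N A) *\<^sub>R h x)"
    unfolding eq by (rule integrable_density[OF h m]) (use c in auto)
  also have "(\<lambda>x. (indicator A x / measure N A) *\<^sub>R h x) = (\<lambda>x. (1 / measure N A) * (h x * indicator A x))"
    by (auto simp: fun_eq_iff)
  also have "integrable N \<dots> \<longleftrightarrow> integrable N (\<lambda>x. h x * indicator A x)"
    using c by (subst integrable_mult_left_iff) simp
  finally show "integrable (uniform_measure N A) h \<longleftrightarrow> integrable N (\<lambda>x. h x * indicator A x)" .
  have "(\<integral>x. h x \<partial>uniform_measure N A) = (\<integral>x. (indicator A x / measure N A) * h x \<partial>N)"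
    unfolding eq by (subst integral_density[OF h m]) (use c in auto)
  also have "\<dots> = (\<integral>x. h x * indicator A x \<partial>N) / measure N A"
    by (simp add: mult.commute)
  finally show "(\<integral>x. h x * indicator A x \<partial>N) = measure N A * (\<integral>x. h x \<partial>uniform_measure N A)"
    using c by simp
qed

lemma countable_sumset: "countable A \<Longrightarrow> countable B \<Longrightarrow> countable (sumset A B)"
proof -
  assume "countable A" "countable B"
  then have "countable ((\<lambda>(a, b). a + b) ` (A \<times> B))" by auto
  moreover have "sumset A B = (\<lambda>(a, b). a + b) ` (A \<times> B)" by (auto simp: sumset_def)
  ultimately show ?thesis by simp
qed

theorem mainTheorem15:
  fixes M :: "'a measure" and X Y :: "'a \<Rightarrow> real" and DX DY :: "real set"
  assumes "prob_space M"
    and "prob_space.indep_var M borel X borel Y"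
    and "discrete_continuous M X DX"
    and "discrete_continuous M Y DY"
    and "finite_diff_entropy (cont_part M X DX)"
    and "finite_diff_entropy (cont_part M Y DY)"
    and "finite_diff_entropy (cont_part M (\<lambda>\<omega>. X \<omega> + Y \<omega>) (sumset DX DY))"
  shows "diff_entropy (cont_part M (\<lambda>\<omega>. X \<omega> + Y \<omega>) (sumset DX DY))
           \<ge> min (diff_entropy (cont_part M X DX)) (diff_entropy (cont_part M Y DY))"
proof -
  note P = assms(1) and indXY = assms(2) and dcX = assms(3) and dcY = assms(4)
    and feX = assms(5) and feY = assms(6) and feZ = assms(7)
  interpret prob_space M by fact
  have indYX: "indep_var borel Y borel X" by (rule indep_var_commute[OF P indXY])
  have Xm[measurable]: "X \<in> borel_measurable M" and DXc: "countable DX"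
    and p0: "0 < prob (X -` DX \<inter> space M)" and p1: "prob (X -` DX \<inter> space M) < 1"
    and acX: "absolutely_continuous lborel (cont_part M X DX)"
    using dcX by (auto simp: discrete_continuous_def cont_part_def)
  have Ym[measurable]: "Y \<in> borel_measurable M" and DYc: "countable DY"
    and q0: "0 < prob (Y -` DY \<inter> space M)" and q1: "prob (Y -` DY \<inter> space M) < 1"
    and acY: "absolutely_continuous lborel (cont_part M Y DY)"
    using dcY by (auto simp: discrete_continuous_def cont_part_def)
  define S where "S = sumset DX DY"
  have Sc: "countable S" unfolding S_def by (rule countable_sumset[OF DXc DYc])
  note [measurable] = countable_borel[OF DXc] countable_borel[OF DYc] countable_borel[OF Sc]
  define p where "p = prob (X -` DX \<inter> space M)"
  define q where "q = prob (Y -` DY \<inter> space M)"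
  have pc: "prob (X -` (UNIV - DX) \<inter> space M) = 1 - p"
  proof -
    have "X -` (UNIV - DX) \<inter> space M = space M - (X -` DX \<inter> space M)" by auto
    then show ?thesis unfolding p_def by (simp add: prob_compl)
  qed
  have qc: "prob (Y -` (UNIV - DY) \<inter> space M) = 1 - q"
  proof -
    have "Y -` (UNIV - DY) \<inter> space M = space M - (Y -` DY \<inter> space M)" by auto
    then show ?thesis unfolding q_def by (simp add: prob_compl)
  qed
  have posX: "emeasure M (X -` (UNIV - DX) \<inter> space M) \<noteq> 0"
    using pc p1 unfolding p_def by (simp add: emeasure_eq_measure)
  have posY: "emeasure M (Y -` (UNIV - DY) \<inter> space M) \<noteq> 0"
    using qc q1 unfolding q_def by (simp add: emeasure_eq_measure)
  have N1: "\<And>A. A \<in> sets borel \<Longrightarrow> emeasure lborel A = 0 \<Longrightarrow>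
      {\<omega>\<in>space M. X \<omega> + Y \<omega> \<in> A \<and> X \<omega> \<notin> DX} \<in> null_sets M"
    using null_sum_event[OF P indXY DXc acX posX] by (auto simp: null_sets_def)
  have N2: "\<And>A. A \<in> sets borel \<Longrightarrow> emeasure lborel A = 0 \<Longrightarrow>
      {\<omega>\<in>space M. X \<omega> + Y \<omega> \<in> A \<and> Y \<omega> \<notin> DY} \<in> null_sets M"
    using null_sum_event[OF P indYX DYc acY posY] by (auto simp: null_sets_def add.commute)
  have Snull: "emeasure lborel S = 0" using countable_imp_null_set_lborel[OF Sc] by (simp add: null_sets_def)
  have aeX: "AE \<omega> in M. X \<omega> \<notin> DX \<longrightarrow> X \<omega> + Y \<omega> \<notin> S"
    by (rule AE_I'[OF N1[OF _ Snull]]) auto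
  have aeY: "AE \<omega> in M. Y \<omega> \<notin> DY \<longrightarrow> X \<omega> + Y \<omega> \<notin> S"
    by (rule AE_I'[OF N2[OF _ Snull]]) auto
  have detS: "\<And>\<omega>. X \<omega> \<in> DX \<Longrightarrow> Y \<omega> \<in> DY \<Longrightarrow> X \<omega> + Y \<omega> \<in> S"
    unfolding S_def sumset_def by auto
  define Z where "Z = (\<lambda>\<omega>. X \<omega> + Y \<omega>)"
  have Zm[measurable]: "Z \<in> borel_measurable M" unfolding Z_def by measurable
  let ?PZ = "distr M borel Z"
  interpret PZ: prob_space ?PZ by (rule prob_space_distr) simp
  define \<nu> where "\<nu> = cont_part M Z S"
  have \<nu>_def': "\<nu> = uniform_measure ?PZ (UNIV - S)" by (simp add: \<nu>_def cont_part_def cond_law_def)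
  define W where "W = Z -` (UNIV - S) \<inter> space M"
  define W' where "W' = {\<omega>\<in>space M. Y \<omega> \<notin> DY \<or> (X \<omega> \<notin> DX \<and> Y \<omega> \<in> DY)}"
  have Wm[measurable]: "W \<in> sets M" unfolding W_def by measurable
  have W'm[measurable]: "W' \<in> sets M" unfolding W'_def by measurable
  have aeW: "AE \<omega> in M. \<omega> \<in> W \<longleftrightarrow> \<omega> \<in> W'"
    using aeX aeY by eventually_elim (auto simp: W_def W'_def Z_def dest: detS)
  have probW': "prob W' = (1 - q) + q * (1 - p)"
  proof -
    have "W' = (Y -` (UNIV - DY) \<inter> space M) \<union> {\<omega>\<in>space M. X \<omega> \<in> UNIV - DX \<and> Y \<omega> \<in> DY}"
      by (auto simp: W'_def)
    then have "prob W' = prob (Y -` (UNIV - DY) \<inter> space M) + prob {\<omega>\<in>space M. X \<omega> \<in> UNIV - DX \<and> Y \<omega> \<in> DY}"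
      by (simp, subst finite_measure_Union) auto
    also have "prob {\<omega>\<in>space M. X \<omega> \<in> UNIV - DX \<and> Y \<omega> \<in> DY} = prob {\<omega>\<in>space M. X \<omega> \<in> UNIV - DX} * prob {\<omega>\<in>space M. Y \<omega> \<in> DY}"
      by (rule prob_indep_random_variable[OF indXY]) auto
    also have "{\<omega>\<in>space M. X \<omega> \<in> UNIV - DX} = X -` (UNIV - DX) \<inter> space M" by auto
    also have "{\<omega>\<in>space M. Y \<omega> \<in> DY} = Y -` DY \<inter> space M" by auto
    finally show ?thesis using pc qc by (simp add: q_def)
  qed
  have probW: "prob W = (1 - q) + q * (1 - p)"
    using measure_eq_AE[OF aeW Wm W'm] probW' by simp
  have PZW: "measure ?PZ (UNIV - S) = prob W" unfolding W_def by (subst measure_distr) auto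
  have q01: "0 < q" "q < 1" using q0 q1 by (auto simp: q_def)
  have p01: "0 < p" "p < 1" using p0 p1 by (auto simp: p_def)
  have PWpos: "prob W > 0" unfolding probW using q01 p01 by (simp add: add_pos_nonneg)
  have PZS0: "emeasure ?PZ (UNIV - S) \<noteq> 0"
    using PWpos PZW by (simp add: PZ.emeasure_eq_measure)
  have posZ: "emeasure M (Z -` (UNIV - S) \<inter> space M) \<noteq> 0"
    using PWpos unfolding W_def by (simp add: emeasure_eq_measure)
  have acZ: "absolutely_continuous lborel \<nu>"
    unfolding absolutely_continuous_def
  proof
    fix A :: "real set" assume A: "A \<in> null_sets lborel"
    then have Ab[measurable]: "A \<in> sets borel" and A0: "emeasure lborel A = 0" by (auto simp: null_sets_def)
    have "{\<omega>\<in>space M. Z \<omega> \<in> (UNIV - S) \<inter> A} \<in> null_sets M"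
    proof (rule null_sets_subset)
      show "{\<omega>\<in>space M. X \<omega> + Y \<omega> \<in> A \<and> X \<omega> \<notin> DX} \<union> {\<omega>\<in>space M. X \<omega> + Y \<omega> \<in> A \<and> Y \<omega> \<notin> DY} \<in> null_sets M"
        using N1[OF Ab A0] N2[OF Ab A0] by auto
      show "{\<omega>\<in>space M. Z \<omega> \<in> (UNIV - S) \<inter> A} \<in> sets M" by measurable
      show "{\<omega>\<in>space M. Z \<omega> \<in> (UNIV - S) \<inter> A} \<subseteq> {\<omega>\<in>space M. X \<omega> + Y \<omega> \<in> A \<and> X \<omega> \<notin> DX} \<union> {\<omega>\<in>space M. X \<omega> + Y \<omega> \<in> A \<and> Y \<omega> \<notin> DY}"
        using detS by (auto simp: Z_def)
    qed
    then have "emeasure ?PZ ((UNIV - S) \<inter> A) = 0"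
      by (subst emeasure_distr) (auto simp: null_sets_def vimage_def Int_def conj_commute)
    then have "emeasure \<nu> A = 0" unfolding \<nu>_def' by (subst emeasure_uniform_measure) auto
    then show "A \<in> null_sets \<nu>" using Ab by (simp add: null_sets_def \<nu>_def')
  qed
  have \<nu>p: "prob_space \<nu>" "sets \<nu> = sets borel"
    using cont_part_prob[OF P Zm Sc posZ] unfolding \<nu>_def by auto
  define f where "f = dens \<nu>"
  note fp = dens_props[OF \<nu>p acZ, folded f_def]
  note [measurable] = fp(2)
  define \<phi> where "\<phi> = (\<lambda>x. - ln (f x))"
  have \<phi>m[measurable]: "\<phi> \<in> borel_measurable borel" unfolding \<phi>_def by measurable
  have fl: "integrable lborel (\<lambda>x. f x * ln (f x))"
    using feZ by (simp add: finite_diff_entropy_def f_def \<nu>_def Z_def S_def)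
  have hZ: "diff_entropy \<nu> = - (\<integral>x. f x * ln (f x) \<partial>lborel)"
    by (simp add: diff_entropy_def f_def)
  have int\<nu>: "integrable \<nu> \<phi>"
    unfolding fp(1)[symmetric] by (subst integrable_density) (use fp fl in \<open>auto simp: \<phi>_def\<close>)
  have "(\<integral>x. \<phi> x \<partial>\<nu>) = - (\<integral>x. f x * ln (f x) \<partial>lborel)"
    unfolding fp(1)[symmetric] by (subst integral_density) (use fp in \<open>auto simp: \<phi>_def\<close>)
  then have eq\<nu>: "(\<integral>x. \<phi> x \<partial>\<nu>) = diff_entropy \<nu>" using hZ by simp
  have PZS: "measure ?PZ (UNIV - S) > 0" using PZW PWpos by simp
  have \<phi>m': "\<phi> \<in> borel_measurable ?PZ" by simp
  have Sm': "UNIV - S \<in> sets ?PZ" by simp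
  note umZ = uniform_measure_real_iff[OF PZ.finite_measure_axioms Sm' PZS \<phi>m', folded \<nu>_def']
  define F where "F = (\<lambda>\<omega>. \<phi> (Z \<omega>) * indicator (UNIV - S) (Z \<omega>))"
  have Fm[measurable]: "F \<in> borel_measurable M" unfolding F_def by measurable
  have intF: "integrable M F"
    using umZ(1) int\<nu> unfolding F_def by (subst (asm) integrable_distr_eq) auto
  have eqF: "integral\<^sup>L M F = prob W * diff_entropy \<nu>"
    using umZ(2) eq\<nu> PZW unfolding F_def by (subst (asm) integral_distr) auto
  have "AE x in density lborel (\<lambda>x. ennreal (f x)). 0 < f x" by (subst AE_density) auto
  then have "AE x in \<nu>. 0 < f x" unfolding fp(1) .
  then have "AE x in ?PZ. x \<in> UNIV - S \<longrightarrow> 0 < f x"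
    unfolding \<nu>_def' by (subst (asm) AE_uniform_measure) (use PZS0 in \<open>auto simp: less_top[symmetric]\<close>)
  then have aeZ: "AE \<omega> in M. Z \<omega> \<notin> S \<longrightarrow> 0 < f (Z \<omega>)"
    by (subst (asm) AE_distr_iff) auto
  define T1 where "T1 = (\<lambda>\<omega>. - ln (f (Y \<omega> + X \<omega>)) * indicator (UNIV - DY) (Y \<omega>) * indicator (UNIV::real set) (X \<omega>))"
  define T2 where "T2 = (\<lambda>\<omega>. - ln (f (X \<omega> + Y \<omega>)) * indicator (UNIV - DX) (X \<omega>) * indicator DY (Y \<omega>))"
  have T1m[measurable]: "T1 \<in> borel_measurable M" unfolding T1_def by measurable
  have T2m[measurable]: "T2 \<in> borel_measurable M" unfolding T2_def by measurable
  have aeSplit: "AE \<omega> in M. F \<omega> = T1 \<omega> + T2 \<omega> \<and> norm (T1 \<omega>) \<le> norm (F \<omega>) \<and> norm (T2 \<omega>) \<le> norm (F \<omega>)"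
    using aeX aeY
  proof eventually_elim
    case (elim \<omega>)
    show ?case
    proof (cases "Y \<omega> \<in> DY")
      case False
      then show ?thesis using elim
        by (simp add: F_def T1_def T2_def Z_def \<phi>_def add.commute)
    next
      case True
      show ?thesis
      proof (cases "X \<omega> \<in> DX")
        case True2: True
        then have "Z \<omega> \<in> S" using detS True by (simp add: Z_def)
        then show ?thesis using True True2 by (simp add: F_def T1_def T2_def)
      next
        case False
        then show ?thesis using elim True
          by (simp add: F_def T1_def T2_def Z_def \<phi>_def)
      qed
    qed
  qed
  have intT1: "integrable M T1"
    by (rule Bochner_Integration.integrable_bound[OF intF T1m]) (use aeSplit in \<open>auto elim: AE_mp\<close>)
  have intT2: "integrable M T2"
    by (rule Bochner_Integration.integrable_bound[OF intF T2m]) (use aeSplit in \<open>auto elim: AE_mp\<close>)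
  have sumF: "integral\<^sup>L M F = integral\<^sup>L M T1 + integral\<^sup>L M T2"
  proof -
    have "integral\<^sup>L M F = (\<integral>\<omega>. T1 \<omega> + T2 \<omega> \<partial>M)"
      by (rule integral_cong_AE) (use aeSplit in \<open>auto elim: AE_mp\<close>)
    also have "\<dots> = integral\<^sup>L M T1 + integral\<^sup>L M T2" using intT1 intT2 by simp
    finally show ?thesis .
  qed
  have f1: "(\<integral>x. f x \<partial>lborel) \<le> 1" using fp(5) by simp
  have ae1: "AE \<omega> in M. Y \<omega> \<notin> DY \<and> X \<omega> \<in> UNIV \<longrightarrow> 0 < f (Y \<omega> + X \<omega>)"
    using aeY aeZ by eventually_elim (auto simp: Z_def add.commute)
  have ae2: "AE \<omega> in M. X \<omega> \<notin> DX \<and> Y \<omega> \<in> DY \<longrightarrow> 0 < f (X \<omega> + Y \<omega>)"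
    using aeX aeZ by eventually_elim (auto simp: Z_def)
  have G1: "measure M (X -` UNIV \<inter> space M) * measure M (Y -` (UNIV - DY) \<inter> space M) * diff_entropy (cont_part M Y DY)
     \<le> integral\<^sup>L M T1"
    unfolding T1_def
    by (rule sum_lower[OF P indXY DYc acY posY feY fp(2) fp(3) fp(4) f1 _ _ ae1])
       (simp, use intT1 in \<open>simp add: T1_def\<close>)
  have G2: "measure M (Y -` DY \<inter> space M) * measure M (X -` (UNIV - DX) \<inter> space M) * diff_entropy (cont_part M X DX)
     \<le> integral\<^sup>L M T2"
    unfolding T2_def
    by (rule sum_lower[OF P indYX DXc acX posX feX fp(2) fp(3) fp(4) f1 _ _ ae2])
       (simp, use intT2 in \<open>simp add: T2_def\<close>)
  define hX where "hX = diff_entropy (cont_part M X DX)"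
  define hY where "hY = diff_entropy (cont_part M Y DY)"
  have "X -` UNIV \<inter> space M = space M" by auto
  then have G1': "(1 - q) * hY \<le> integral\<^sup>L M T1" using G1 qc prob_space by (simp add: hY_def)
  have G2': "q * (1 - p) * hX \<le> integral\<^sup>L M T2" using G2 pc by (simp add: hX_def q_def)
  have main: "(1 - q) * hY + q * (1 - p) * hX \<le> prob W * diff_entropy \<nu>"
    using G1' G2' sumF eqF by simp
  have a: "0 < 1 - q" "0 \<le> q * (1 - p)" using q01 p01 by auto
  have "(prob W) * min hX hY = (1 - q) * min hX hY + q * (1 - p) * min hX hY"
    unfolding probW by (simp add: algebra_simps)
  also have "\<dots> \<le> (1 - q) * hY + q * (1 - p) * hX"
    using a by (intro add_mono mult_left_mono) auto
  also have "\<dots> \<le> prob W * diff_entropy \<nu>" by (rule main)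
  finally have "min hX hY \<le> diff_entropy \<nu>" using PWpos by simp
  then show ?thesis by (simp add: hX_def hY_def \<nu>_def Z_def S_def)
qed

end
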